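(* Let $R=k[x_1,\dots,x_m]$ be a standard graded polynomial ring over an infinite field $k$, $\lambda:\mathbb Z^m\to\mathbb Z$ a linear map, and $I$ a homogeneous ideal. With $S$ and $\widetilde I$ as in the context, $$r(R/\operatorname{in}_\lambda(I))=r(S/\widetilde I).$$
   Context: For a monomial $u=x^b$, $\lambda(u)=\lambda(b)$. For $0\ne g=\sum a_iu_i\in R$, $\operatorname{in}_\lambda(g)$ is the sum of terms of maximal weight, and $\operatorname{in}_\lambda(I)$ is generated by all $\operatorname{in}_\lambda(g)$, $0\ne g\in I$. With $b(g)=\max\lambda(u_i)$ and a new variable $t$, put $g^*=t^{b(g)}g(t^{-\lambda(x_1)}x_1,\dots,t^{-\lambda(x_m)}x_m)$; $I^*\subseteq R[t]$ is generated by all $g^*$, $g\in I$; $S=k[t]_{(t)}[x_1,\dots,x_m]$ is a standard graded algebra over the local ring $k[t]_{(t)}$ ($\deg x_i=1$, $\deg t=0$), and $\widetilde I=I^*S$. For a standard graded algebra $T$ over a local ring and a finitely generated graded $T$-module $E$ (here $E=R/\operatorname{in}_\lambda(I)$ over $R$, or $E=S/\widetilde I$ over $S$): a reduction of $E$ is an ideal $Q$ of $T$ generated by elements of degree $1$ with $(QE)_n=E_n$ for all large $n$; $r_Q(E)$ is the least $n_0$ with $(QE)_n=E_n$ for all $n>n_0$; $Q$ is minimal if it contains no other reduction of $E$; $r(E)=\min\{r_Q(E):Q\text{ minimal reduction of }E\}$. *)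

theory Defs
  imports "HOL-Library.Poly_Mapping" "HOL-Computational_Algebra.Polynomial"
          "HOL-Computational_Algebra.Fraction_Field"
begin

(* Multivariate polynomials in the variables of a finite type 'v with coefficients in a
  ring K are elements of type ('v <Rightarrow><^sub>0 nat) <Rightarrow><^sub>0 K (monomial exponent vector to coefficient).
  A standard graded algebra over a coefficient subring C of K is the set of polynomials
  with all coefficients in C, graded by total degree in the x-variables. *)

type_synonym ('v, 'a) mpoly = "('v \<Rightarrow>\<^sub>0 nat) \<Rightarrow>\<^sub>0 'a"

definition mdeg :: "('v \<Rightarrow>\<^sub>0 nat) \<Rightarrow> nat" where
  "mdeg a = (\<Sum>v\<in>Poly_Mapping.keys a. Poly_Mapping.lookup a v)"

definition homog :: "nat \<Rightarrow> ('v, 'a::zero) mpoly \<Rightarrow> bool" where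
  "homog n p \<longleftrightarrow> (\<forall>a\<in>Poly_Mapping.keys p. mdeg a = n)"

definition homog_comp :: "nat \<Rightarrow> ('v, 'a::comm_monoid_add) mpoly \<Rightarrow> ('v, 'a) mpoly" where
  "homog_comp n p = (\<Sum>a\<in>{a\<in>Poly_Mapping.keys p. mdeg a = n}. Poly_Mapping.single a (Poly_Mapping.lookup p a))"

definition PR :: "'a::comm_ring_1 set \<Rightarrow> ('v, 'a) mpoly set" where
  "PR C = {p. \<forall>a. Poly_Mapping.lookup p a \<in> C}"

definition is_ideal :: "'a::comm_ring_1 set \<Rightarrow> ('v, 'a) mpoly set \<Rightarrow> bool" where
  "is_ideal C J \<longleftrightarrow> J \<subseteq> PR C \<and> 0 \<in> J \<and> (\<forall>f\<in>J. \<forall>g\<in>J. f + g \<in> J)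
      \<and> (\<forall>f\<in>J. \<forall>r\<in>PR C. r * f \<in> J)"

definition homog_ideal :: "'a::comm_ring_1 set \<Rightarrow> ('v, 'a) mpoly set \<Rightarrow> bool" where
  "homog_ideal C J \<longleftrightarrow> is_ideal C J \<and> (\<forall>f\<in>J. \<forall>n. homog_comp n f \<in> J)"

definition ideal_gen :: "'a::comm_ring_1 set \<Rightarrow> ('v, 'a) mpoly set \<Rightarrow> ('v, 'a) mpoly set" where
  "ideal_gen C G = \<Inter>{J. is_ideal C J \<and> G \<subseteq> J}"

definition ideal_sum :: "('v, 'a::comm_ring_1) mpoly set \<Rightarrow> ('v, 'a) mpoly set \<Rightarrow> ('v, 'a) mpoly set" where
  "ideal_sum A B = {a + b |a b. a \<in> A \<and> b \<in> B}"

(* Module E = T/J with T = PR C.  (QE)_n = E_n  iff every homogeneous element of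
  degree n of T lies in Q + J (J homogeneous). *)
definition red_at :: "'a::comm_ring_1 set \<Rightarrow> ('v, 'a) mpoly set \<Rightarrow> ('v, 'a) mpoly set \<Rightarrow> nat \<Rightarrow> bool" where
  "red_at C J Q n \<longleftrightarrow> (\<forall>f\<in>PR C. homog n f \<longrightarrow> f \<in> ideal_sum Q J)"

definition is_reduction :: "'a::comm_ring_1 set \<Rightarrow> ('v, 'a) mpoly set \<Rightarrow> ('v, 'a) mpoly set \<Rightarrow> bool" where
  "is_reduction C J Q \<longleftrightarrow>
     (\<exists>G. G \<subseteq> {p\<in>PR C. homog 1 p} \<and> Q = ideal_gen C G) \<and> (\<exists>N. \<forall>n\<ge>N. red_at C J Q n)"

definition red_num_Q :: "'a::comm_ring_1 set \<Rightarrow> ('v, 'a) mpoly set \<Rightarrow> ('v, 'a) mpoly set \<Rightarrow> nat" where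
  "red_num_Q C J Q = (LEAST n0. \<forall>n>n0. red_at C J Q n)"

definition minimal_reduction :: "'a::comm_ring_1 set \<Rightarrow> ('v, 'a) mpoly set \<Rightarrow> ('v, 'a) mpoly set \<Rightarrow> bool" where
  "minimal_reduction C J Q \<longleftrightarrow> is_reduction C J Q \<and>
     (\<forall>Q'. is_reduction C J Q' \<and> Q' \<subseteq> Q \<longrightarrow> Q' = Q)"

definition red_num :: "'a::comm_ring_1 set \<Rightarrow> ('v, 'a) mpoly set \<Rightarrow> nat" where
  "red_num C J = Inf {red_num_Q C J Q |Q. minimal_reduction C J Q}"

(* Weights: lambda(b) = sum_i w_i b_i. *)
definition wt :: "('v \<Rightarrow> int) \<Rightarrow> ('v \<Rightarrow>\<^sub>0 nat) \<Rightarrow> int" where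
  "wt w a = (\<Sum>v\<in>Poly_Mapping.keys a. w v * int (Poly_Mapping.lookup a v))"

definition bw :: "('v \<Rightarrow> int) \<Rightarrow> ('v, 'a::zero) mpoly \<Rightarrow> int" where
  "bw w g = Max (wt w ` Poly_Mapping.keys g)"

definition init_form :: "('v \<Rightarrow> int) \<Rightarrow> ('v, 'a::comm_monoid_add) mpoly \<Rightarrow> ('v, 'a) mpoly" where
  "init_form w g = (\<Sum>a\<in>{a\<in>Poly_Mapping.keys g. wt w a = bw w g}. Poly_Mapping.single a (Poly_Mapping.lookup g a))"

definition init_ideal :: "('v \<Rightarrow> int) \<Rightarrow> ('v, 'a::comm_ring_1) mpoly set \<Rightarrow> ('v, 'a) mpoly set" where
  "init_ideal w I = ideal_gen UNIV {init_form w g |g. g \<in> I \<and> g \<noteq> 0}"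

(* g* = t^{b(g)} g(t^{-lambda(x_1)} x_1, ...), as a polynomial in x with coefficients in
  k[t], embedded in k(t) = 'k poly fract. *)
definition hstar :: "('v \<Rightarrow> int) \<Rightarrow> ('v, 'k::field) mpoly \<Rightarrow> ('v, 'k poly fract) mpoly" where
  "hstar w g = (\<Sum>a\<in>Poly_Mapping.keys g.
      Poly_Mapping.single a (Fract (monom (Poly_Mapping.lookup g a) (nat (bw w g - wt w a))) 1))"

definition loc_t :: "'k::field poly fract set" where
  "loc_t = {Fract p q |p q. poly q 0 \<noteq> 0}"

definition tilde_ideal :: "('v \<Rightarrow> int) \<Rightarrow> ('v, 'k::field) mpoly set \<Rightarrow> ('v, 'k poly fract) mpoly set" where
  "tilde_ideal w I = ideal_gen loc_t (hstar w ` I)"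

end

theory Submission
  imports Defs "HOL-Library.FuncSet"
begin


lemma lookup_map_pm: "g 0 = 0 \<Longrightarrow> Poly_Mapping.lookup (Poly_Mapping.map g f) k = g (Poly_Mapping.lookup f k)"
  by transfer (simp add: when_def)

definition sc :: "'a::comm_ring_1 \<Rightarrow> ('v, 'a) mpoly \<Rightarrow> ('v, 'a) mpoly" where
  "sc c p = Poly_Mapping.single 0 c * p"

lemma lookup_sc [simp]: "Poly_Mapping.lookup (sc c p) a = c * Poly_Mapping.lookup p a"
  unfolding sc_def mult_map_scale_conv_mult[symmetric] by (simp add: lookup_map_pm)

lemma pm_expand:
  assumes "finite A" "Poly_Mapping.keys p \<subseteq> A"
  shows "(\<Sum>a\<in>A. Poly_Mapping.single a (Poly_Mapping.lookup p a)) = p"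
proof (rule poly_mapping_eqI)
  fix k
  have "(\<Sum>x\<in>A. Poly_Mapping.lookup p x when x = k) = (\<Sum>x\<in>A. if x = k then Poly_Mapping.lookup p x else 0)"
    by (rule sum.cong) (auto simp: when_def)
  also have "\<dots> = Poly_Mapping.lookup p k" using assms by (auto simp: in_keys_iff)
  finally show "Poly_Mapping.lookup (\<Sum>a\<in>A. Poly_Mapping.single a (Poly_Mapping.lookup p a)) k = Poly_Mapping.lookup p k"
    by (simp add: lookup_sum lookup_single)
qed

lemma pm_expand_keys: "(\<Sum>a\<in>Poly_Mapping.keys p. Poly_Mapping.single a (Poly_Mapping.lookup p a)) = p"
  by (rule pm_expand) auto

lemma pm_mult_expand:
  fixes p q :: "('v, 'a::comm_ring_1) mpoly"
  assumes "finite A" "Poly_Mapping.keys p \<subseteq> A" "finite B" "Poly_Mapping.keys q \<subseteq> B"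
  shows "p * q = (\<Sum>a\<in>A. \<Sum>b\<in>B. Poly_Mapping.single (a+b) (Poly_Mapping.lookup p a * Poly_Mapping.lookup q b))"
proof -
  have "p * q = (\<Sum>a\<in>A. Poly_Mapping.single a (Poly_Mapping.lookup p a)) * (\<Sum>b\<in>B. Poly_Mapping.single b (Poly_Mapping.lookup q b))"
    using pm_expand[OF assms(1,2)] pm_expand[OF assms(3,4)] by simp
  also have "\<dots> = (\<Sum>a\<in>A. \<Sum>b\<in>B. Poly_Mapping.single a (Poly_Mapping.lookup p a) * Poly_Mapping.single b (Poly_Mapping.lookup q b))"
    by (simp add: sum_product)
  finally show ?thesis by (simp add: mult_single)
qed

lemma sc_add: "sc c (p + q) = sc c p + sc c q"
  by (simp add: sc_def distrib_left)
lemma sc_add2: "sc (c + d) p = sc c p + sc d p"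
  by (simp add: sc_def single_add distrib_right)
lemma sc_sc: "sc c (sc d p) = sc (c * d) p"
  by (simp add: sc_def mult.assoc[symmetric] mult_single)
lemma sc_one: "sc 1 p = p"
  by (simp add: sc_def)
lemma sc_zero: "sc c 0 = 0"
  by (simp add: sc_def)
lemma sc_sum: "sc c (sum f A) = (\<Sum>a\<in>A. sc c (f a))"
  by (simp add: sc_def sum_distrib_left)
lemma sc_minus: "sc c (p - q) = sc c p - sc c q"
  by (simp add: sc_def right_diff_distrib)
lemma sc_mult: "sc c p * q = sc c (p * q)"
  by (simp add: sc_def mult.assoc)

section \<open>The local ring\<close>

definition ev0 :: "'k::field poly fract \<Rightarrow> 'k" where
  "ev0 x = (SOME c. \<exists>p q. x = Fract p q \<and> poly q 0 \<noteq> 0 \<and> c = poly p 0 / poly q 0)"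

lemma ev0_Fract:
  assumes "poly q 0 \<noteq> 0" shows "ev0 (Fract p q) = poly p 0 / poly q 0"
proof -
  have uniq: "c = poly p 0 / poly q 0"
    if "\<exists>p' q'. Fract p q = Fract p' q' \<and> poly q' 0 \<noteq> 0 \<and> c = poly p' 0 / poly q' 0" for c
  proof -
    from that obtain p' q' where h: "Fract p q = Fract p' q'" "poly q' 0 \<noteq> 0" "c = poly p' 0 / poly q' 0" by blast
    have "q \<noteq> 0" "q' \<noteq> 0" using assms h(2) by auto
    hence "p * q' = p' * q" using h(1) by (simp add: eq_fract)
    hence e1: "poly p 0 * poly q' 0 = poly p' 0 * poly q 0" by (metis poly_mult)
    have e2: "c * poly q' 0 = poly p' 0" using h by simp
    have "(c * poly q 0) * poly q' 0 = poly p 0 * poly q' 0" using e1 e2 by (metis mult.commute mult.assoc)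
    hence "c * poly q 0 = poly p 0" using h(2) by simp
    thus ?thesis using assms by (simp add: field_simps)
  qed
  show ?thesis unfolding ev0_def
    apply (rule someI2[where a = "poly p 0 / poly q 0"])
    using assms apply blast
    using uniq by blast
qed

lemma loc_tI: "poly q 0 \<noteq> 0 \<Longrightarrow> Fract p q \<in> loc_t"
  unfolding loc_t_def by blast

lemma loc_tE:
  assumes "x \<in> loc_t" obtains p q where "x = Fract p q" "poly q 0 \<noteq> 0"
  using assms unfolding loc_t_def by blast

lemma loc_t_0 [simp]: "0 \<in> loc_t"
  by (metis Zero_fract_def loc_tI one_poly_eq_simps(1) poly_1 zero_neq_one)
lemma loc_t_1 [simp]: "1 \<in> loc_t"
  by (metis One_fract_def loc_tI one_poly_eq_simps(1) poly_1 zero_neq_one)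
lemma ev0_0 [simp]: "ev0 0 = 0"
  by (simp add: Zero_fract_def ev0_Fract)
lemma ev0_1 [simp]: "ev0 1 = 1"
  by (simp add: One_fract_def ev0_Fract)

lemma loc_t_add: "x \<in> loc_t \<Longrightarrow> y \<in> loc_t \<Longrightarrow> x + y \<in> loc_t"
  and ev0_add: "x \<in> loc_t \<Longrightarrow> y \<in> loc_t \<Longrightarrow> ev0 (x + y) = ev0 x + ev0 y"
proof -
  assume "x \<in> loc_t" "y \<in> loc_t"
  then obtain p q p' q' where h: "x = Fract p q" "poly q 0 \<noteq> 0" "y = Fract p' q'" "poly q' 0 \<noteq> 0"
    by (metis loc_tE)
  have nz: "q \<noteq> 0" "q' \<noteq> 0" using h by auto
  show "x + y \<in> loc_t" using h nz by (auto intro!: loc_tI)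
  show "ev0 (x + y) = ev0 x + ev0 y" using h nz by (simp add: ev0_Fract field_simps)
qed

lemma loc_t_mult: "x \<in> loc_t \<Longrightarrow> y \<in> loc_t \<Longrightarrow> x * y \<in> loc_t"
  and ev0_mult: "x \<in> loc_t \<Longrightarrow> y \<in> loc_t \<Longrightarrow> ev0 (x * y) = ev0 x * ev0 y"
proof -
  assume "x \<in> loc_t" "y \<in> loc_t"
  then obtain p q p' q' where h: "x = Fract p q" "poly q 0 \<noteq> 0" "y = Fract p' q'" "poly q' 0 \<noteq> 0"
    by (metis loc_tE)
  show "x * y \<in> loc_t" using h by (auto intro!: loc_tI)
  show "ev0 (x * y) = ev0 x * ev0 y" using h by (simp add: ev0_Fract field_simps)
qed

lemma loc_t_uminus: "x \<in> loc_t \<Longrightarrow> - x \<in> loc_t"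
  and ev0_uminus: "x \<in> loc_t \<Longrightarrow> ev0 (- x) = - ev0 x"
proof -
  assume "x \<in> loc_t"
  then obtain p q where h: "x = Fract p q" "poly q 0 \<noteq> 0" by (metis loc_tE)
  show "- x \<in> loc_t" using h by (auto intro!: loc_tI)
  show "ev0 (- x) = - ev0 x" using h by (simp add: ev0_Fract)
qed

lemma loc_t_diff: "x \<in> loc_t \<Longrightarrow> y \<in> loc_t \<Longrightarrow> x - y \<in> loc_t"
  using loc_t_add loc_t_uminus by (metis diff_conv_add_uminus)
lemma ev0_diff: "x \<in> loc_t \<Longrightarrow> y \<in> loc_t \<Longrightarrow> ev0 (x - y) = ev0 x - ev0 y"
  using ev0_add ev0_uminus loc_t_uminus by (metis diff_conv_add_uminus)

lemma loc_t_inverse: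
  assumes "x \<in> loc_t" "ev0 x \<noteq> 0" shows "inverse x \<in> loc_t" "inverse x * x = 1"
proof -
  obtain p q where h: "x = Fract p q" "poly q 0 \<noteq> 0" using assms(1) by (metis loc_tE)
  have "poly p 0 \<noteq> 0" using assms(2) h by (simp add: ev0_Fract)
  thus "inverse x \<in> loc_t" using h by (auto intro!: loc_tI)
  have "x \<noteq> 0" using assms(2) by auto
  thus "inverse x * x = 1" by simp
qed

definition kap :: "'k::field \<Rightarrow> 'k poly fract" where "kap c = Fract [:c:] 1"

lemma kap_loc [simp]: "kap c \<in> loc_t"
  unfolding kap_def by (rule loc_tI) simp
lemma ev0_kap [simp]: "ev0 (kap c) = c"
  unfolding kap_def by (simp add: ev0_Fract)
lemma kap_0 [simp]: "kap 0 = 0"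
  unfolding kap_def by (simp add: Zero_fract_def)
lemma kap_add: "kap (c + d) = kap c + kap d"
  unfolding kap_def by simp
lemma kap_mult: "kap (c * d) = kap c * kap d"
  unfolding kap_def by (simp add: mult.commute[of c d])

section \<open>Subrings, PR, ideals\<close>

definition subr :: "'a::comm_ring_1 set \<Rightarrow> bool" where
  "subr C \<longleftrightarrow> 0 \<in> C \<and> 1 \<in> C \<and> (\<forall>x\<in>C. \<forall>y\<in>C. x + y \<in> C \<and> x * y \<in> C \<and> - x \<in> C)"

lemma subr_UNIV: "subr UNIV" by (simp add: subr_def)
lemma subr_loc_t: "subr loc_t" by (simp add: subr_def loc_t_add loc_t_mult loc_t_uminus)

lemma PR_UNIV [simp]: "PR UNIV = UNIV" by (simp add: PR_def)
lemma PR_lookup: "p \<in> PR C \<Longrightarrow> Poly_Mapping.lookup p a \<in> C" by (simp add: PR_def)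
lemma PR_I: "(\<And>a. Poly_Mapping.lookup p a \<in> C) \<Longrightarrow> p \<in> PR C" by (simp add: PR_def)

lemma PR_0: "subr C \<Longrightarrow> 0 \<in> PR C" by (simp add: PR_def subr_def)
lemma PR_add: "subr C \<Longrightarrow> p \<in> PR C \<Longrightarrow> q \<in> PR C \<Longrightarrow> p + q \<in> PR C"
  by (simp add: PR_def subr_def lookup_add)
lemma PR_uminus: "subr C \<Longrightarrow> p \<in> PR C \<Longrightarrow> - p \<in> PR C"
  unfolding PR_def subr_def by auto
lemma PR_diff: "subr C \<Longrightarrow> p \<in> PR C \<Longrightarrow> q \<in> PR C \<Longrightarrow> p - q \<in> PR C"
  by (metis PR_add PR_uminus diff_conv_add_uminus)
lemma PR_single: "subr C \<Longrightarrow> c \<in> C \<Longrightarrow> Poly_Mapping.single a c \<in> PR C"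
  by (simp add: PR_def subr_def lookup_single when_def)
lemma PR_sum: "subr C \<Longrightarrow> (\<And>i. i \<in> A \<Longrightarrow> f i \<in> PR C) \<Longrightarrow> sum f A \<in> PR C"
  by (induct A rule: infinite_finite_induct) (auto simp: PR_0 PR_add)
lemma PR_mult:
  assumes C: "subr C" and p: "p \<in> PR C" and q: "q \<in> PR C" shows "p * q \<in> PR C"
proof -
  have "p * q = (\<Sum>a\<in>Poly_Mapping.keys p. \<Sum>b\<in>Poly_Mapping.keys q. Poly_Mapping.single (a+b) (Poly_Mapping.lookup p a * Poly_Mapping.lookup q b))"
    by (rule pm_mult_expand) auto
  also have "\<dots> \<in> PR C" using C p q
    by (intro PR_sum PR_single) (auto simp: subr_def PR_def)
  finally show ?thesis .
qed
lemma PR_sc: "subr C \<Longrightarrow> c \<in> C \<Longrightarrow> p \<in> PR C \<Longrightarrow> sc c p \<in> PR C"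
  by (simp add: PR_def subr_def)
lemma PR_1: "subr C \<Longrightarrow> 1 \<in> PR C"
  by (metis PR_single single_one subr_def)

lemma is_ideal_PR: "subr C \<Longrightarrow> is_ideal C (PR C)"
  by (simp add: is_ideal_def PR_0 PR_add PR_mult)

lemma ideal_PR: "is_ideal C J \<Longrightarrow> J \<subseteq> PR C" by (simp add: is_ideal_def)
lemma ideal_0: "is_ideal C J \<Longrightarrow> 0 \<in> J" by (simp add: is_ideal_def)
lemma ideal_add: "is_ideal C J \<Longrightarrow> f \<in> J \<Longrightarrow> g \<in> J \<Longrightarrow> f + g \<in> J" by (simp add: is_ideal_def)
lemma ideal_mult: "is_ideal C J \<Longrightarrow> f \<in> J \<Longrightarrow> r \<in> PR C \<Longrightarrow> r * f \<in> J" by (simp add: is_ideal_def)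

lemma ideal_gen_ideal:
  assumes "subr C" "G \<subseteq> PR C" shows "is_ideal C (ideal_gen C G)"
proof -
  have PRin: "PR C \<in> {J. is_ideal C J \<and> G \<subseteq> J}" using assms is_ideal_PR by auto
  show ?thesis
  proof (unfold is_ideal_def[of C "ideal_gen C G"], intro conjI ballI)
    show "ideal_gen C G \<subseteq> PR C" using PRin unfolding ideal_gen_def by blast
    show "0 \<in> ideal_gen C G" unfolding ideal_gen_def by (auto simp: is_ideal_def)
    show "f + g \<in> ideal_gen C G" if "f \<in> ideal_gen C G" "g \<in> ideal_gen C G" for f g
      using that unfolding ideal_gen_def by (auto simp: is_ideal_def)
    show "r * f \<in> ideal_gen C G" if "f \<in> ideal_gen C G" "r \<in> PR C" for f r
      using that unfolding ideal_gen_def by (auto simp: is_ideal_def)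
  qed
qed

lemma ideal_gen_sub: "G \<subseteq> ideal_gen C G" by (auto simp: ideal_gen_def)
lemma ideal_gen_least: "is_ideal C J \<Longrightarrow> G \<subseteq> J \<Longrightarrow> ideal_gen C G \<subseteq> J" by (auto simp: ideal_gen_def)
lemma ideal_gen_mono: "G \<subseteq> H \<Longrightarrow> ideal_gen C G \<subseteq> ideal_gen C H" by (auto simp: ideal_gen_def)

lemma ideal_sum_closed: "is_ideal C J \<Longrightarrow> (\<And>i. i \<in> A \<Longrightarrow> f i \<in> J) \<Longrightarrow> sum f A \<in> J"
  by (induct A rule: infinite_finite_induct) (auto simp: ideal_0 ideal_add)
lemma ideal_sc: "subr C \<Longrightarrow> is_ideal C J \<Longrightarrow> c \<in> C \<Longrightarrow> f \<in> J \<Longrightarrow> sc c f \<in> J"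
  unfolding sc_def by (simp add: ideal_mult PR_single)
lemma sc_minus_one: "sc (-1) f = - f"
  by (rule poly_mapping_eqI) simp
lemma ideal_uminus: "subr C \<Longrightarrow> is_ideal C J \<Longrightarrow> f \<in> J \<Longrightarrow> - f \<in> J"
  by (metis ideal_sc sc_minus_one subr_def)
lemma ideal_diff: "subr C \<Longrightarrow> is_ideal C J \<Longrightarrow> f \<in> J \<Longrightarrow> g \<in> J \<Longrightarrow> f - g \<in> J"
  by (metis ideal_add ideal_uminus diff_conv_add_uminus)

lemma ideal_sum_ideal:
  assumes C: "subr C" and A: "is_ideal C A" and B: "is_ideal C B"
  shows "is_ideal C (ideal_sum A B)"
  unfolding is_ideal_def ideal_sum_def
proof (intro conjI ballI)
  show "{a + b |a b. a \<in> A \<and> b \<in> B} \<subseteq> PR C"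
    using A B C by (auto intro!: PR_add dest: ideal_PR)
  show "0 \<in> {a + b |a b. a \<in> A \<and> b \<in> B}"
    using A B by (auto intro!: exI[of _ 0] simp: ideal_0)
  show "f + g \<in> {a + b |a b. a \<in> A \<and> b \<in> B}" if "f \<in> {a + b |a b. a \<in> A \<and> b \<in> B}" "g \<in> {a + b |a b. a \<in> A \<and> b \<in> B}" for f g
  proof -
    from that obtain a b a' b' where "f = a + b" "g = a' + b'" "a \<in> A" "b \<in> B" "a' \<in> A" "b' \<in> B" by blast
    hence "f + g = (a + a') + (b + b')" by (simp add: ac_simps)
    thus ?thesis using A B \<open>a \<in> A\<close> \<open>b \<in> B\<close> \<open>a' \<in> A\<close> \<open>b' \<in> B\<close> by (blast intro: ideal_add)
  qed
  show "r * f \<in> {a + b |a b. a \<in> A \<and> b \<in> B}" if "f \<in> {a + b |a b. a \<in> A \<and> b \<in> B}" "r \<in> PR C" for f r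
  proof -
    from that obtain a b where "f = a + b" "a \<in> A" "b \<in> B" by blast
    hence "r * f = r * a + r * b" by (simp add: distrib_left)
    thus ?thesis using A B that \<open>a \<in> A\<close> \<open>b \<in> B\<close> by (blast intro: ideal_mult)
  qed
qed

section \<open>Homogeneous components\<close>

lemma lookup_hc: "Poly_Mapping.lookup (homog_comp n p) a = (if mdeg a = n then Poly_Mapping.lookup p a else 0)"
proof -
  have "Poly_Mapping.lookup (homog_comp n p) a =
     (\<Sum>x\<in>{a \<in> Poly_Mapping.keys p. mdeg a = n}. if x = a then Poly_Mapping.lookup p x else 0)"
    unfolding homog_comp_def lookup_sum lookup_single by (rule sum.cong) (auto simp: when_def)
  also have "\<dots> = (if mdeg a = n then Poly_Mapping.lookup p a else 0)"
    by (auto simp: in_keys_iff)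
  finally show ?thesis .
qed

lemma homog_iff: "homog n p \<longleftrightarrow> (\<forall>a. Poly_Mapping.lookup p a \<noteq> 0 \<longrightarrow> mdeg a = n)"
  by (auto simp: homog_def in_keys_iff)

lemma hc_add: "homog_comp n (p + q) = homog_comp n p + homog_comp n q"
  by (rule poly_mapping_eqI) (simp add: lookup_hc lookup_add)
lemma hc_uminus: "homog_comp n (- p) = - homog_comp n (p :: ('v, 'a::ab_group_add) mpoly)"
  by (rule poly_mapping_eqI) (simp add: lookup_hc)
lemma hc_diff: "homog_comp n (p - q) = homog_comp n p - homog_comp n (q :: ('v, 'a::ab_group_add) mpoly)"
  by (rule poly_mapping_eqI) (simp add: lookup_hc lookup_minus)
lemma hc_zero [simp]: "homog_comp n 0 = 0"
  by (rule poly_mapping_eqI) (simp add: lookup_hc)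
lemma hc_sum: "homog_comp n (sum f A) = (\<Sum>i\<in>A. homog_comp n (f i))"
  by (rule poly_mapping_eqI) (simp add: lookup_hc lookup_sum)
lemma hc_sc: "homog_comp n (sc c p) = sc c (homog_comp n p)"
  by (rule poly_mapping_eqI) (simp add: lookup_hc)
lemma hc_homog: "homog d p \<Longrightarrow> homog_comp n p = (if n = d then p else 0)"
  by (rule poly_mapping_eqI) (auto simp: lookup_hc homog_iff)
lemma homog_hc: "homog n (homog_comp n p)"
  by (simp add: homog_iff lookup_hc)
lemma hc_PR: "subr C \<Longrightarrow> p \<in> PR C \<Longrightarrow> homog_comp n p \<in> PR C"
  by (simp add: PR_def lookup_hc subr_def)
lemma homog_0 [simp]: "homog n 0"
  by (simp add: homog_def)
lemma homog_add: "homog n p \<Longrightarrow> homog n q \<Longrightarrow> homog n (p + q)"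
  unfolding homog_iff lookup_add by (metis add.left_neutral add.right_neutral)
lemma homog_sc: "homog n p \<Longrightarrow> homog n (sc c p)"
  unfolding homog_iff lookup_sc by (metis mult_zero_right)

lemma mdeg_sup:
  assumes "finite K" "Poly_Mapping.keys a \<subseteq> K"
  shows "mdeg a = (\<Sum>v\<in>K. Poly_Mapping.lookup a v)"
  unfolding mdeg_def using assms by (intro sum.mono_neutral_left) (auto simp: in_keys_iff)

lemma mdeg_add: "mdeg (a + b) = mdeg a + mdeg b"
proof -
  let ?K = "Poly_Mapping.keys a \<union> Poly_Mapping.keys b"
  have "Poly_Mapping.keys (a + b) \<subseteq> ?K" by (rule keys_add)
  hence "mdeg (a + b) = (\<Sum>v\<in>?K. Poly_Mapping.lookup (a + b) v)" by (intro mdeg_sup) auto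
  also have "\<dots> = (\<Sum>v\<in>?K. Poly_Mapping.lookup a v) + (\<Sum>v\<in>?K. Poly_Mapping.lookup b v)"
    by (simp add: lookup_add sum.distrib)
  also have "\<dots> = mdeg a + mdeg b" by (subst (1 2) mdeg_sup[of ?K]) auto
  finally show ?thesis .
qed

lemma mdeg_0 [simp]: "mdeg 0 = 0" by (simp add: mdeg_def)
lemma mdeg_eq_0: "mdeg a = 0 \<longleftrightarrow> a = 0"
proof
  assume "mdeg a = 0"
  hence "\<forall>v\<in>Poly_Mapping.keys a. Poly_Mapping.lookup a v = 0" unfolding mdeg_def by simp
  thus "a = 0" by (metis in_keys_iff keys_eq_empty ex_in_conv)
qed simp

lemma homog_mult: "homog i p \<Longrightarrow> homog j q \<Longrightarrow> homog (i + j) (p * q)"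
  unfolding homog_def using keys_mult[of p q] by (force simp: mdeg_add)

definition hdeg :: "('v, 'a::zero) mpoly \<Rightarrow> nat" where
  "hdeg p = Max (insert 0 (mdeg ` Poly_Mapping.keys p))"

lemma hdeg_ge: "Poly_Mapping.lookup p a \<noteq> 0 \<Longrightarrow> mdeg a \<le> hdeg p"
  unfolding hdeg_def by (rule Max_ge) (auto simp: in_keys_iff)

lemma hc_expand: "hdeg p \<le> D \<Longrightarrow> (\<Sum>i\<le>D. homog_comp i p) = p"
proof (rule poly_mapping_eqI)
  fix a assume D: "hdeg p \<le> D"
  have "Poly_Mapping.lookup (\<Sum>i\<le>D. homog_comp i p) a = (\<Sum>i\<le>D. if i = mdeg a then Poly_Mapping.lookup p a else 0)"
    by (simp add: lookup_sum lookup_hc eq_commute)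
  also have "\<dots> = Poly_Mapping.lookup p a"
    using hdeg_ge[of p a] D by (cases "Poly_Mapping.lookup p a = 0") auto
  finally show "Poly_Mapping.lookup (\<Sum>i\<le>D. homog_comp i p) a = Poly_Mapping.lookup p a" .
qed

lemma hc_mult_expand:
  "homog_comp n (p * q) = (\<Sum>i\<le>hdeg p. \<Sum>k\<le>hdeg q. if i + k = n then homog_comp i p * homog_comp k q else 0)"
proof -
  have "p * q = (\<Sum>i\<le>hdeg p. homog_comp i p) * (\<Sum>k\<le>hdeg q. homog_comp k q)"
    by (simp add: hc_expand)
  also have "\<dots> = (\<Sum>i\<le>hdeg p. \<Sum>k\<le>hdeg q. homog_comp i p * homog_comp k q)"
    by (simp add: sum_product)
  finally have "homog_comp n (p * q) = (\<Sum>i\<le>hdeg p. \<Sum>k\<le>hdeg q. homog_comp n (homog_comp i p * homog_comp k q))"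
    by (simp add: hc_sum)
  also have "\<dots> = (\<Sum>i\<le>hdeg p. \<Sum>k\<le>hdeg q. if i + k = n then homog_comp i p * homog_comp k q else 0)"
    by (intro sum.cong refl) (simp add: hc_homog[OF homog_mult[OF homog_hc homog_hc]] eq_commute)
  finally show ?thesis .
qed




section \<open>Reduction modulo t and the embedding\<close>

definition rho :: "('v, 'k::field poly fract) mpoly \<Rightarrow> ('v, 'k) mpoly" where
  "rho p = Poly_Mapping.map ev0 p"
definition iota :: "('v, 'k::field) mpoly \<Rightarrow> ('v, 'k poly fract) mpoly" where
  "iota p = Poly_Mapping.map kap p"

lemma lookup_rho [simp]: "Poly_Mapping.lookup (rho p) a = ev0 (Poly_Mapping.lookup p a)"
  by (simp add: rho_def lookup_map_pm)
lemma lookup_iota [simp]: "Poly_Mapping.lookup (iota p) a = kap (Poly_Mapping.lookup p a)"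
  by (simp add: iota_def lookup_map_pm)
lemma iota_PR: "iota p \<in> PR loc_t"
  by (simp add: PR_def)
lemma rho_iota [simp]: "rho (iota p) = p"
  by (rule poly_mapping_eqI) simp
lemma rho_0 [simp]: "rho 0 = 0"
  by (rule poly_mapping_eqI) simp
lemma rho_add: "p \<in> PR loc_t \<Longrightarrow> q \<in> PR loc_t \<Longrightarrow> rho (p + q) = rho p + rho q"
  by (rule poly_mapping_eqI) (simp add: lookup_add ev0_add PR_lookup)
lemma rho_uminus: "p \<in> PR loc_t \<Longrightarrow> rho (- p) = - rho p"
  by (rule poly_mapping_eqI) (simp add: ev0_uminus PR_lookup)
lemma rho_diff: "p \<in> PR loc_t \<Longrightarrow> q \<in> PR loc_t \<Longrightarrow> rho (p - q) = rho p - rho q"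
  by (rule poly_mapping_eqI) (simp add: lookup_minus ev0_diff PR_lookup)
lemma rho_sum: "(\<And>i. i \<in> A \<Longrightarrow> f i \<in> PR loc_t) \<Longrightarrow> rho (sum f A) = (\<Sum>i\<in>A. rho (f i))"
proof (induct A rule: infinite_finite_induct)
  case (insert x F)
  thus ?case by (simp add: rho_add PR_sum subr_loc_t)
qed simp_all
lemma rho_single: "c \<in> loc_t \<Longrightarrow> rho (Poly_Mapping.single a c) = Poly_Mapping.single a (ev0 c)"
  by (rule poly_mapping_eqI) (simp add: lookup_single when_def)
lemma keys_rho: "Poly_Mapping.keys (rho p) \<subseteq> Poly_Mapping.keys p"
  by (auto simp: in_keys_iff)
lemma keys_iota: "Poly_Mapping.keys (iota p) \<subseteq> Poly_Mapping.keys p"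
  by (auto simp: in_keys_iff)

lemma rho_mult:
  assumes p: "p \<in> PR loc_t" and q: "q \<in> PR loc_t"
  shows "rho (p * q) = rho p * rho q"
proof -
  have "rho (p * q) = rho (\<Sum>a\<in>Poly_Mapping.keys p. \<Sum>b\<in>Poly_Mapping.keys q. Poly_Mapping.single (a+b) (Poly_Mapping.lookup p a * Poly_Mapping.lookup q b))"
    by (subst pm_mult_expand[of "Poly_Mapping.keys p" p "Poly_Mapping.keys q" q]) auto
  also have "\<dots> = (\<Sum>a\<in>Poly_Mapping.keys p. \<Sum>b\<in>Poly_Mapping.keys q. Poly_Mapping.single (a+b) (ev0 (Poly_Mapping.lookup p a) * ev0 (Poly_Mapping.lookup q b)))"
    using p q
    by (simp add: rho_sum PR_sum PR_single subr_loc_t rho_single PR_lookup loc_t_mult ev0_mult)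
  also have "\<dots> = rho p * rho q"
    by (subst pm_mult_expand[of "Poly_Mapping.keys p" "rho p" "Poly_Mapping.keys q" "rho q"]) (auto simp: keys_rho)
  finally show ?thesis .
qed

lemma rho_hc: "rho (homog_comp n p) = homog_comp n (rho p)"
  by (rule poly_mapping_eqI) (simp add: lookup_hc)
lemma homog_rho: "homog n p \<Longrightarrow> homog n (rho p)"
  unfolding homog_def using keys_rho by blast
lemma homog_iota: "homog n p \<Longrightarrow> homog n (iota p)"
  unfolding homog_def using keys_iota by blast
lemma rho_sc:
  assumes "c \<in> loc_t" "p \<in> PR loc_t" shows "rho (sc c p) = sc (ev0 c) (rho p)"
proof (rule poly_mapping_eqI)
  fix a
  have "Poly_Mapping.lookup p a \<in> loc_t" using assms(2) by (rule PR_lookup)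
  thus "Poly_Mapping.lookup (rho (sc c p)) a = Poly_Mapping.lookup (sc (ev0 c) (rho p)) a"
    using assms(1) by (simp add: ev0_mult)
qed
lemma iota_add: "iota (p + q) = iota p + iota q"
  by (rule poly_mapping_eqI) (simp add: lookup_add kap_add)
lemma iota_0 [simp]: "iota 0 = 0"
  by (rule poly_mapping_eqI) simp
lemma iota_sum: "iota (sum f A) = (\<Sum>i\<in>A. iota (f i))"
  by (induct A rule: infinite_finite_induct) (simp_all add: iota_add)
lemma iota_sc: "iota (sc c p) = sc (kap c) (iota p)"
  by (rule poly_mapping_eqI) (simp add: kap_mult)

lemma rho_kernel:
  assumes "p \<in> PR loc_t" "rho p = 0"
  shows "Poly_Mapping.lookup p a \<in> loc_t" "ev0 (Poly_Mapping.lookup p a) = 0"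
  using assms by (auto simp: PR_lookup dest: arg_cong[where f = "\<lambda>p. Poly_Mapping.lookup p a"])

lemma ideal_UNIV: "is_ideal UNIV (ideal_gen UNIV G)"
  by (rule ideal_gen_ideal) (auto simp: subr_UNIV)

lemma rho_ideal_gen:
  assumes G: "G \<subseteq> PR loc_t"
  shows "rho ` ideal_gen loc_t G = ideal_gen UNIV (rho ` G)"
proof
  let ?J = "{p \<in> PR loc_t. rho p \<in> ideal_gen UNIV (rho ` G)}"
  have IU: "is_ideal UNIV (ideal_gen UNIV (rho ` G))" by (rule ideal_UNIV)
  have "is_ideal loc_t ?J"
    unfolding is_ideal_def[of loc_t ?J]
  proof (intro conjI ballI)
    show "?J \<subseteq> PR loc_t" by blast
    show "0 \<in> ?J" using IU by (simp add: PR_0 subr_loc_t ideal_0)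
    show "f + g \<in> ?J" if "f \<in> ?J" "g \<in> ?J" for f g
      using that IU by (simp add: PR_add subr_loc_t rho_add ideal_add)
    show "r * f \<in> ?J" if "f \<in> ?J" "r \<in> PR loc_t" for f r
      using that IU by (simp add: PR_mult subr_loc_t rho_mult ideal_mult)
  qed
  moreover have "G \<subseteq> ?J" using G ideal_gen_sub[of "rho ` G" UNIV] by auto
  ultimately have "ideal_gen loc_t G \<subseteq> ?J" by (rule ideal_gen_least)
  thus "rho ` ideal_gen loc_t G \<subseteq> ideal_gen UNIV (rho ` G)" by blast
next
  let ?IG = "ideal_gen loc_t G"
  have IG: "is_ideal loc_t ?IG" by (rule ideal_gen_ideal[OF subr_loc_t G])
  have "is_ideal UNIV (rho ` ?IG)"
    unfolding is_ideal_def[of UNIV "rho ` ?IG"]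
  proof (intro conjI ballI)
    show "rho ` ?IG \<subseteq> PR UNIV" by simp
    show "0 \<in> rho ` ?IG" using IG by (metis ideal_0 image_eqI rho_0)
    show "f + g \<in> rho ` ?IG" if "f \<in> rho ` ?IG" "g \<in> rho ` ?IG" for f g
    proof -
      from that obtain f' g' where "f = rho f'" "g = rho g'" "f' \<in> ?IG" "g' \<in> ?IG" by blast
      moreover have "f' \<in> PR loc_t" "g' \<in> PR loc_t" using IG calculation by (auto dest: ideal_PR)
      ultimately show ?thesis using IG by (metis rho_add ideal_add image_eqI)
    qed
    show "r * f \<in> rho ` ?IG" if "f \<in> rho ` ?IG" "r \<in> PR UNIV" for f r
    proof -
      from that obtain f' where "f = rho f'" "f' \<in> ?IG" by blast
      moreover have "f' \<in> PR loc_t" using IG calculation by (auto dest: ideal_PR)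
      moreover have "iota r * f' \<in> ?IG" using IG calculation by (simp add: ideal_mult iota_PR)
      ultimately show ?thesis by (metis rho_mult iota_PR rho_iota image_eqI)
    qed
  qed
  moreover have "rho ` G \<subseteq> rho ` ?IG" using ideal_gen_sub by blast
  ultimately show "ideal_gen UNIV (rho ` G) \<subseteq> rho ` ?IG" by (rule ideal_gen_least)
qed

lemma wt_le_bw: "a \<in> Poly_Mapping.keys g \<Longrightarrow> wt w a \<le> bw w g"
  unfolding bw_def by (rule Max_ge) auto

lemma lookup_hstar: "Poly_Mapping.lookup (hstar w g) a =
   (if a \<in> Poly_Mapping.keys g then Fract (monom (Poly_Mapping.lookup g a) (nat (bw w g - wt w a))) 1 else 0)"
proof -
  have "Poly_Mapping.lookup (hstar w g) a = (\<Sum>x\<in>Poly_Mapping.keys g.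
      if x = a then Fract (monom (Poly_Mapping.lookup g x) (nat (bw w g - wt w x))) 1 else 0)"
    unfolding hstar_def lookup_sum lookup_single by (rule sum.cong) (auto simp: when_def)
  thus ?thesis by simp
qed

lemma lookup_init_form: "Poly_Mapping.lookup (init_form w g) a =
   (if wt w a = bw w g then Poly_Mapping.lookup g a else 0)"
proof -
  have "Poly_Mapping.lookup (init_form w g) a = (\<Sum>x\<in>{a \<in> Poly_Mapping.keys g. wt w a = bw w g}.
      if x = a then Poly_Mapping.lookup g x else 0)"
    unfolding init_form_def lookup_sum lookup_single by (rule sum.cong) (auto simp: when_def)
  thus ?thesis by (auto simp: in_keys_iff)
qed

lemma hstar_PR: "hstar w g \<in> PR loc_t"
  by (rule PR_I) (auto simp: lookup_hstar intro!: loc_tI)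

lemma rho_hstar: "rho (hstar w g) = init_form w g"
proof (rule poly_mapping_eqI)
  fix a
  show "Poly_Mapping.lookup (rho (hstar w g)) a = Poly_Mapping.lookup (init_form w g) a"
  proof (cases "a \<in> Poly_Mapping.keys g")
    case True
    have le: "wt w a \<le> bw w g" using wt_le_bw[OF True] .
    have "Poly_Mapping.lookup (rho (hstar w g)) a = Poly_Mapping.lookup g a * 0 ^ nat (bw w g - wt w a)"
      using True by (simp add: lookup_hstar ev0_Fract poly_monom)
    also have "\<dots> = (if wt w a = bw w g then Poly_Mapping.lookup g a else 0)"
      using le by auto
    finally show ?thesis by (simp add: lookup_init_form)
  next
    case False
    thus ?thesis by (simp add: lookup_hstar lookup_init_form in_keys_iff)
  qed
qed

lemma init_form_0 [simp]: "init_form w 0 = 0"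
  by (simp add: init_form_def)

lemma tilde_is_ideal: "is_ideal loc_t (tilde_ideal w I)"
  unfolding tilde_ideal_def by (rule ideal_gen_ideal[OF subr_loc_t]) (auto simp: hstar_PR)

lemma init_is_ideal: "is_ideal UNIV (init_ideal w I)"
  unfolding init_ideal_def by (rule ideal_UNIV)

lemma rho_tilde: "rho ` tilde_ideal w I = init_ideal w I"
proof -
  have "hstar w ` I \<subseteq> PR loc_t" using hstar_PR by blast
  hence "rho ` tilde_ideal w I = ideal_gen UNIV (rho ` hstar w ` I)"
    unfolding tilde_ideal_def by (rule rho_ideal_gen)
  also have "rho ` hstar w ` I = init_form w ` I" by (simp add: image_image rho_hstar)
  also have "ideal_gen UNIV (init_form w ` I) = init_ideal w I"
  proof
    show "ideal_gen UNIV (init_form w ` I) \<subseteq> init_ideal w I"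
      unfolding init_ideal_def
    proof (rule ideal_gen_least[OF ideal_UNIV])
      show "init_form w ` I \<subseteq> ideal_gen UNIV {init_form w g |g. g \<in> I \<and> g \<noteq> 0}"
      proof
        fix x assume "x \<in> init_form w ` I"
        then obtain g where g: "g \<in> I" "x = init_form w g" by blast
        show "x \<in> ideal_gen UNIV {init_form w g |g. g \<in> I \<and> g \<noteq> 0}"
        proof (cases "g = 0")
          case True thus ?thesis using g ideal_0[OF ideal_UNIV] by simp
        next
          case False
          hence "x \<in> {init_form w g |g. g \<in> I \<and> g \<noteq> 0}" using g by blast
          thus ?thesis using ideal_gen_sub[of _ UNIV] by (rule subsetD[rotated])
        qed
      qed
    qed
    have "{init_form w g |g. g \<in> I \<and> g \<noteq> 0} \<subseteq> init_form w ` I" by blast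
    thus "init_ideal w I \<subseteq> ideal_gen UNIV (init_form w ` I)"
      unfolding init_ideal_def by (rule ideal_gen_mono)
  qed
  finally show ?thesis .
qed




lemma ideal_gen_hc:
  assumes C: "subr C" and G: "G \<subseteq> PR C"
    and hG: "\<And>g n. g \<in> G \<Longrightarrow> homog_comp n g \<in> ideal_gen C G"
  shows "f \<in> ideal_gen C G \<Longrightarrow> homog_comp n f \<in> ideal_gen C G"
proof -
  let ?J = "ideal_gen C G"
  have J: "is_ideal C ?J" by (rule ideal_gen_ideal[OF C G])
  let ?X = "{m \<in> ?J. \<forall>n. homog_comp n m \<in> ?J}"
  have "is_ideal C ?X"
    unfolding is_ideal_def[of C ?X]
  proof (intro conjI ballI)
    show "?X \<subseteq> PR C" using J ideal_PR by blast
    show "0 \<in> ?X" using J by (simp add: ideal_0)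
    show "f + g \<in> ?X" if "f \<in> ?X" "g \<in> ?X" for f g
      using that J by (simp add: ideal_add hc_add)
    show "r * f \<in> ?X" if "f \<in> ?X" "r \<in> PR C" for f r
    proof -
      have "homog_comp n (r * f) \<in> ?J" for n
        unfolding hc_mult_expand
        using that J by (auto intro!: ideal_sum_closed ideal_mult hc_PR[OF C] simp: ideal_0)
      thus ?thesis using that J by (simp add: ideal_mult)
    qed
  qed
  moreover have "G \<subseteq> ?X" using hG ideal_gen_sub by blast
  ultimately have "?J \<subseteq> ?X" by (rule ideal_gen_least)
  thus "f \<in> ?J \<Longrightarrow> homog_comp n f \<in> ?J" by blast
qed

lemma ideal_gen_hc_homog:
  assumes C: "subr C" and G: "G \<subseteq> PR C" and hG: "\<And>g. g \<in> G \<Longrightarrow> homog 1 g"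
  shows "f \<in> ideal_gen C G \<Longrightarrow> homog_comp n f \<in> ideal_gen C G"
proof (rule ideal_gen_hc[OF C G])
  fix g n assume g: "g \<in> G"
  show "homog_comp n g \<in> ideal_gen C G"
  proof (cases "n = 1")
    case True thus ?thesis using g hG hc_homog ideal_gen_sub by fastforce
  next
    case False thus ?thesis using g hG hc_homog ideal_0[OF ideal_gen_ideal[OF C G]] by fastforce
  qed
qed

lemma keys_hc: "Poly_Mapping.keys (homog_comp n g) = {a \<in> Poly_Mapping.keys g. mdeg a = n}"
  by (auto simp: in_keys_iff lookup_hc split: if_splits)

lemma hstar_hc0:
  assumes h: "homog_comp n g = 0" shows "homog_comp n (hstar w g) = 0"
proof (rule poly_mapping_eqI)
  fix a
  have "Poly_Mapping.lookup (homog_comp n g) a = 0" using h by simp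
  thus "Poly_Mapping.lookup (homog_comp n (hstar w g)) a = Poly_Mapping.lookup 0 a"
    by (auto simp: lookup_hc lookup_hstar in_keys_iff split: if_splits)
qed

lemma hstar_hc:
  assumes nz: "homog_comp n g \<noteq> 0"
  shows "homog_comp n (hstar w g) = sc (Fract (monom 1 (nat (bw w g - bw w (homog_comp n g)))) 1) (hstar w (homog_comp n g))"
proof (rule poly_mapping_eqI)
  fix a
  let ?h = "homog_comp n g"
  have ne: "Poly_Mapping.keys ?h \<noteq> {}" using nz by simp
  have bwle: "bw w ?h \<le> bw w g"
    unfolding bw_def using ne by (intro Max_mono) (auto simp: keys_hc)
  show "Poly_Mapping.lookup (homog_comp n (hstar w g)) a = Poly_Mapping.lookup (sc (Fract (monom 1 (nat (bw w g - bw w ?h))) 1) (hstar w ?h)) a"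
  proof (cases "mdeg a = n \<and> a \<in> Poly_Mapping.keys g")
    case True
    hence ah: "a \<in> Poly_Mapping.keys ?h" by (simp add: keys_hc)
    have le: "wt w a \<le> bw w ?h" using wt_le_bw[OF ah] .
    have eq: "nat (bw w g - bw w ?h) + nat (bw w ?h - wt w a) = nat (bw w g - wt w a)"
      using le bwle by linarith
    have lh: "Poly_Mapping.lookup ?h a = Poly_Mapping.lookup g a" using True by (simp add: lookup_hc)
    show ?thesis using True ah
      by (simp add: lookup_hc lookup_hstar lh mult_monom eq)
  next
    case False
    hence "a \<notin> Poly_Mapping.keys ?h" by (auto simp: keys_hc)
    thus ?thesis using False by (auto simp: lookup_hc lookup_hstar)
  qed
qed

lemma tilde_hc:
  assumes I: "homog_ideal UNIV I"
  shows "f \<in> tilde_ideal w I \<Longrightarrow> homog_comp n f \<in> tilde_ideal w I"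
  unfolding tilde_ideal_def
proof (rule ideal_gen_hc[OF subr_loc_t])
  show "hstar w ` I \<subseteq> PR loc_t" using hstar_PR by blast
  fix g' n assume "g' \<in> hstar w ` I"
  then obtain g where g: "g \<in> I" "g' = hstar w g" by blast
  have hI: "homog_comp n g \<in> I" using I g unfolding homog_ideal_def by blast
  have J: "is_ideal loc_t (ideal_gen loc_t (hstar w ` I))"
    using tilde_is_ideal unfolding tilde_ideal_def .
  show "homog_comp n g' \<in> ideal_gen loc_t (hstar w ` I)"
  proof (cases "homog_comp n g = 0")
    case True thus ?thesis using g hstar_hc0[OF True] ideal_0[OF J] by simp
  next
    case False
    have "hstar w (homog_comp n g) \<in> ideal_gen loc_t (hstar w ` I)"
      using hI ideal_gen_sub by blast
    moreover have "Fract (monom 1 (nat (bw w g - bw w (homog_comp n g)))) 1 \<in> loc_t"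
      by (rule loc_tI) simp
    ultimately show ?thesis using g hstar_hc[OF False] ideal_sc[OF subr_loc_t J] by simp
  qed
qed

lemma sc_diff2: "sc (c - d) p = sc c p - sc d p"
  by (simp add: sc_def single_diff left_diff_distrib)

lemma N_sum: "0 \<in> N \<Longrightarrow> (\<And>x y. x \<in> N \<Longrightarrow> y \<in> N \<Longrightarrow> x + y \<in> N) \<Longrightarrow> (\<And>i. i \<in> A \<Longrightarrow> f i \<in> N) \<Longrightarrow> sum f A \<in> N"
  by (induct A rule: infinite_finite_induct) auto

lemma nakayama:
  fixes e :: "'i \<Rightarrow> ('v, 'k::field poly fract) mpoly"
  assumes fin: "finite A"
    and N0: "0 \<in> N" and Nadd: "\<And>x y. x \<in> N \<Longrightarrow> y \<in> N \<Longrightarrow> x + y \<in> N"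
    and Nsc: "\<And>c x. c \<in> loc_t \<Longrightarrow> x \<in> N \<Longrightarrow> sc c x \<in> N"
    and hyp: "\<forall>a\<in>A. \<exists>n\<in>N. \<exists>c. (\<forall>b\<in>A. c b \<in> loc_t \<and> ev0 (c b) = 0) \<and> e a = n + (\<Sum>b\<in>A. sc (c b) (e b))"
  shows "\<forall>a\<in>A. e a \<in> N"
  using fin hyp
proof (induction A rule: finite_induct)
  case empty thus ?case by simp
next
  case (insert a0 F)
  obtain n0 c0 where n0: "n0 \<in> N" and c0: "\<forall>b\<in>insert a0 F. c0 b \<in> loc_t \<and> ev0 (c0 b) = 0"
     and e0: "e a0 = n0 + (\<Sum>b\<in>insert a0 F. sc (c0 b) (e b))" using insert.prems by blast
  define z where "z = 1 - c0 a0"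
  have zl: "z \<in> loc_t" "ev0 z = 1" using c0 by (auto simp: z_def loc_t_diff ev0_diff)
  define y where "y = inverse z"
  have yl: "y \<in> loc_t" "y * z = 1" using loc_t_inverse[OF zl(1)] zl(2) by (auto simp: y_def)
  have e0': "e a0 = n0 + sc (c0 a0) (e a0) + (\<Sum>b\<in>F. sc (c0 b) (e b))"
    using e0 insert.hyps by (simp add: add.assoc)
  have "sc z (e a0) = e a0 - sc (c0 a0) (e a0)" by (simp add: z_def sc_diff2 sc_one)
  also have "\<dots> = n0 + (\<Sum>b\<in>F. sc (c0 b) (e b))"
    using arg_cong[OF e0', of "\<lambda>x. x - sc (c0 a0) (e a0)"] by (simp add: algebra_simps)
  finally have ez: "sc z (e a0) = n0 + (\<Sum>b\<in>F. sc (c0 b) (e b))" .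
  have "e a0 = sc y (sc z (e a0))" by (simp add: sc_sc yl sc_one)
  also have "\<dots> = sc y n0 + (\<Sum>b\<in>F. sc (y * c0 b) (e b))"
    by (simp add: ez sc_add sc_sum sc_sc)
  finally have ea0: "e a0 = sc y n0 + (\<Sum>b\<in>F. sc (y * c0 b) (e b))" .
  have IHprem: "\<forall>a\<in>F. \<exists>n\<in>N. \<exists>c. (\<forall>b\<in>F. c b \<in> loc_t \<and> ev0 (c b) = 0) \<and> e a = n + (\<Sum>b\<in>F. sc (c b) (e b))"
  proof
    fix a assume aF: "a \<in> F"
    obtain n c where n: "n \<in> N" and c: "\<forall>b\<in>insert a0 F. c b \<in> loc_t \<and> ev0 (c b) = 0"
      and ea: "e a = n + (\<Sum>b\<in>insert a0 F. sc (c b) (e b))" using insert.prems aF by blast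
    define c' where "c' b = c b + c a0 * (y * c0 b)" for b
    define n' where "n' = n + sc (c a0 * y) n0"
    have "e a = n + sc (c a0) (e a0) + (\<Sum>b\<in>F. sc (c b) (e b))"
      using ea insert.hyps by (simp add: add.assoc)
    also have "sc (c a0) (e a0) = sc (c a0 * y) n0 + (\<Sum>b\<in>F. sc (c a0 * (y * c0 b)) (e b))"
      by (subst ea0) (simp add: sc_add sc_sum sc_sc)
    also have "n + (sc (c a0 * y) n0 + (\<Sum>b\<in>F. sc (c a0 * (y * c0 b)) (e b))) + (\<Sum>b\<in>F. sc (c b) (e b))
        = n' + (\<Sum>b\<in>F. sc (c' b) (e b))"
      by (simp add: n'_def c'_def sc_add2 sum.distrib add_ac)
    finally have "e a = n' + (\<Sum>b\<in>F. sc (c' b) (e b))" .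
    moreover have "n' \<in> N" using n n0 c yl by (auto simp: n'_def intro!: Nadd Nsc loc_t_mult)
    moreover have "\<forall>b\<in>F. c' b \<in> loc_t \<and> ev0 (c' b) = 0"
      using c c0 yl by (auto simp: c'_def loc_t_add loc_t_mult ev0_add ev0_mult)
    ultimately show "\<exists>n\<in>N. \<exists>c. (\<forall>b\<in>F. c b \<in> loc_t \<and> ev0 (c b) = 0) \<and> e a = n + (\<Sum>b\<in>F. sc (c b) (e b))"
      by blast
  qed
  have FN: "\<forall>a\<in>F. e a \<in> N" using insert.IH IHprem by blast
  have "e a0 \<in> N"
    unfolding ea0 using FN n0 yl c0
    by (auto intro!: Nadd Nsc N_sum[where N = N] N0 loc_t_mult)
  thus ?case using FN by blast
qed




lemma homog_diff: "homog n p \<Longrightarrow> homog n q \<Longrightarrow> homog n (p - (q :: ('v, 'a::ab_group_add) mpoly))"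
proof -
  assume hp: "homog n p" and hq: "homog n q"
  show "homog n (p - q)" unfolding homog_iff
  proof (intro allI impI)
    fix a assume nz: "Poly_Mapping.lookup (p - q) a \<noteq> 0"
    show "mdeg a = n"
    proof (rule ccontr)
      assume "mdeg a \<noteq> n"
      hence "Poly_Mapping.lookup p a = 0" "Poly_Mapping.lookup q a = 0" using hp hq unfolding homog_iff by blast+
      hence "Poly_Mapping.lookup (p - q) a = 0" by (simp only: lookup_minus diff_self)
      with nz show False by contradiction
    qed
  qed
qed

lemma lookup_le_mdeg: "Poly_Mapping.lookup a v \<le> mdeg a"
proof (cases "v \<in> Poly_Mapping.keys a")
  case True thus ?thesis unfolding mdeg_def by (intro member_le_sum) auto
next
  case False thus ?thesis by (simp add: in_keys_iff)
qed

lemma fin_mdeg: "finite {a :: ('v::finite \<Rightarrow>\<^sub>0 nat). mdeg a = n}"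
proof -
  have "finite (PiE UNIV (\<lambda>_::'v. {..n}))" by (intro finite_PiE) auto
  moreover have "inj (Poly_Mapping.lookup :: ('v \<Rightarrow>\<^sub>0 nat) \<Rightarrow> _)" by (rule injI, rule poly_mapping_eqI, simp)
  ultimately have "finite (Poly_Mapping.lookup -` PiE UNIV (\<lambda>_::'v. {..n}))" by (rule finite_vimageI)
  moreover have "{a :: ('v \<Rightarrow>\<^sub>0 nat). mdeg a = n} \<subseteq> Poly_Mapping.lookup -` PiE UNIV (\<lambda>_::'v. {..n})"
    using lookup_le_mdeg by (auto simp: PiE_def extensional_def)
  ultimately show ?thesis by (rule finite_subset[rotated])
qed

lemma red_iff:
  fixes w :: "'v::finite \<Rightarrow> int" and I :: "('v, 'k::field) mpoly set"
  assumes I: "homog_ideal UNIV I" and G: "G \<subseteq> PR loc_t" and hG: "\<And>g. g \<in> G \<Longrightarrow> homog 1 g"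
  shows "red_at loc_t (tilde_ideal w I) (ideal_gen loc_t G) n \<longleftrightarrow> red_at UNIV (init_ideal w I) (rho ` ideal_gen loc_t G) n"
proof -
  let ?Q = "ideal_gen loc_t G" and ?Jt = "tilde_ideal w I" and ?Ji = "init_ideal w I"
  have Q: "is_ideal loc_t ?Q" by (rule ideal_gen_ideal[OF subr_loc_t G])
  have Jt: "is_ideal loc_t ?Jt" by (rule tilde_is_ideal)
  show ?thesis
  proof
    assume L: "red_at loc_t ?Jt ?Q n"
    show "red_at UNIV ?Ji (rho ` ?Q) n" unfolding red_at_def
    proof (intro ballI impI)
      fix f :: "('v,'k) mpoly" assume hf: "f \<in> PR UNIV" "homog n f"
      have "iota f \<in> PR loc_t" by (rule iota_PR)
      moreover have "homog n (iota f)" using hf(2) by (rule homog_iota)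
      ultimately have "iota f \<in> ideal_sum ?Q ?Jt" using L unfolding red_at_def by blast
      then obtain q j where qj: "iota f = q + j" "q \<in> ?Q" "j \<in> ?Jt" unfolding ideal_sum_def by blast
      have qP: "q \<in> PR loc_t" using ideal_PR[OF Q] qj(2) by blast
      have jP: "j \<in> PR loc_t" using ideal_PR[OF Jt] qj(3) by blast
      have "rho (iota f) = rho (q + j)" using qj(1) by simp
      hence fe: "f = rho q + rho j" using rho_add[OF qP jP] by simp
      have "rho j \<in> rho ` ?Jt" using qj(3) by (rule imageI)
      hence j': "rho j \<in> ?Ji" by (simp add: rho_tilde)
      have q': "rho q \<in> rho ` ?Q" using qj(2) by (rule imageI)
      show "f \<in> ideal_sum (rho ` ?Q) ?Ji" unfolding ideal_sum_def using fe j' q' by blast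
    qed
  next
    assume R: "red_at UNIV ?Ji (rho ` ?Q) n"
    let ?N = "ideal_sum ?Q ?Jt"
    have N: "is_ideal loc_t ?N" by (rule ideal_sum_ideal[OF subr_loc_t Q Jt])
    have Nhc: "homog_comp n m \<in> ?N" if "m \<in> ?N" for m
    proof -
      from that obtain q j where qj: "m = q + j" "q \<in> ?Q" "j \<in> ?Jt" unfolding ideal_sum_def by blast
      moreover have "homog_comp n q \<in> ?Q" using ideal_gen_hc_homog[OF subr_loc_t G hG] qj by blast
      moreover have "homog_comp n j \<in> ?Jt" using tilde_hc[OF I] qj by blast
      ultimately show ?thesis unfolding ideal_sum_def by (auto simp: hc_add)
    qed
    define A where "A = {a :: 'v \<Rightarrow>\<^sub>0 nat. mdeg a = n}"
    have finA: "finite A" unfolding A_def by (rule fin_mdeg)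
    define e where "e a = Poly_Mapping.single a (1 :: 'k poly fract)" for a :: "'v \<Rightarrow>\<^sub>0 nat"
    have sce: "sc x (e b) = Poly_Mapping.single b x" for x b by (simp add: e_def sc_def mult_single)
    have eN: "\<forall>a\<in>A. e a \<in> ?N"
    proof (rule nakayama[OF finA])
      show "0 \<in> ?N" using N by (rule ideal_0)
      show "x + y \<in> ?N" if "x \<in> ?N" "y \<in> ?N" for x y using N that by (rule ideal_add)
      show "sc c x \<in> ?N" if "c \<in> loc_t" "x \<in> ?N" for c x using ideal_sc[OF subr_loc_t N] that by blast
      show "\<forall>a\<in>A. \<exists>m\<in>?N. \<exists>c. (\<forall>b\<in>A. c b \<in> loc_t \<and> ev0 (c b) = 0) \<and> e a = m + (\<Sum>b\<in>A. sc (c b) (e b))"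
      proof
        fix a assume a: "a \<in> A"
        have ePR: "e a \<in> PR loc_t" by (simp add: e_def PR_single subr_loc_t)
        have rea: "rho (e a) = Poly_Mapping.single a 1" by (simp add: e_def rho_single)
        have hom: "homog n (Poly_Mapping.single a (1::'k))" using a by (simp add: A_def homog_def)
        have home: "homog n (e a)" using a by (simp add: A_def homog_def e_def)
        have "Poly_Mapping.single a 1 \<in> ideal_sum (rho ` ?Q) ?Ji" using R hom unfolding red_at_def by simp
        then obtain q j where qj: "Poly_Mapping.single a 1 = rho q + rho j" "q \<in> ?Q" "j \<in> ?Jt"
          unfolding ideal_sum_def rho_tilde[symmetric] by blast
        have qjP: "q \<in> PR loc_t" "j \<in> PR loc_t" using qj Q Jt ideal_PR by blast+
        define m where "m = homog_comp n (q + j)"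
        have mN: "m \<in> ?N" unfolding m_def using qj by (intro Nhc) (auto simp: ideal_sum_def)
        have mP: "m \<in> PR loc_t" using mN N ideal_PR by blast
        have rm: "rho m = Poly_Mapping.single a 1" unfolding m_def rho_hc using qjP qj(1) hom
          by (simp add: rho_add hc_homog)
        define p where "p = e a - m"
        have pP: "p \<in> PR loc_t" unfolding p_def using subr_loc_t ePR mP by (rule PR_diff)
        have rp: "rho p = 0" unfolding p_def using ePR mP by (simp add: rho_diff rea rm)
        have hp: "homog n p" unfolding p_def m_def using home homog_hc by (rule homog_diff)
        have kp: "Poly_Mapping.keys p \<subseteq> A" using hp by (auto simp: A_def homog_def)
        have "(\<Sum>b\<in>A. sc (Poly_Mapping.lookup p b) (e b)) = p" by (simp add: sce pm_expand[OF finA kp])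
        hence "e a = m + (\<Sum>b\<in>A. sc (Poly_Mapping.lookup p b) (e b))" by (simp add: p_def)
        moreover have "\<forall>b\<in>A. Poly_Mapping.lookup p b \<in> loc_t \<and> ev0 (Poly_Mapping.lookup p b) = 0"
          using rho_kernel[OF pP rp] by blast
        ultimately show "\<exists>m\<in>?N. \<exists>c. (\<forall>b\<in>A. c b \<in> loc_t \<and> ev0 (c b) = 0) \<and> e a = m + (\<Sum>b\<in>A. sc (c b) (e b))"
          using mN by blast
      qed
    qed
    show "red_at loc_t ?Jt ?Q n" unfolding red_at_def
    proof (intro ballI impI)
      fix f :: "('v, 'k poly fract) mpoly" assume f: "f \<in> PR loc_t" "homog n f"
      have kf: "Poly_Mapping.keys f \<subseteq> A" using f(2) by (auto simp: A_def homog_def)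
      have "f = (\<Sum>a\<in>A. sc (Poly_Mapping.lookup f a) (e a))" by (simp add: sce pm_expand[OF finA kf])
      also have "\<dots> \<in> ?N" using eN f(1)
        by (intro ideal_sum_closed[OF N] ideal_sc[OF subr_loc_t N]) (auto simp: PR_lookup)
      finally show "f \<in> ?N" .
    qed
  qed
qed




lemma sc_0: "sc 0 p = 0" by (simp add: sc_def)

lemma hc0_eq: "homog_comp 0 r = Poly_Mapping.single 0 (Poly_Mapping.lookup r 0)"
  by (rule poly_mapping_eqI) (auto simp: lookup_hc lookup_single when_def mdeg_eq_0)

lemma span1:
  fixes e :: "'i \<Rightarrow> ('v, 'k::field poly fract) mpoly"
  assumes fin: "finite B" and eB: "\<And>g. g \<in> B \<Longrightarrow> homog 1 (e g) \<and> e g \<in> PR loc_t"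
    and q: "q \<in> ideal_gen loc_t (e ` B)" and hq: "homog 1 q"
  shows "\<exists>c. (\<forall>g\<in>B. c g \<in> loc_t) \<and> q = (\<Sum>g\<in>B. sc (c g) (e g))"
proof -
  define Sp where "Sp = {x. \<exists>c. (\<forall>g\<in>B. c g \<in> loc_t) \<and> x = (\<Sum>g\<in>B. sc (c g) (e g))}"
  have Sp0: "0 \<in> Sp" unfolding Sp_def by (auto intro!: exI[of _ "\<lambda>_. 0"] simp: sc_0)
  have Spadd: "x + y \<in> Sp" if "x \<in> Sp" "y \<in> Sp" for x y
  proof -
    from that obtain c1 c2 where "\<forall>g\<in>B. c1 g \<in> loc_t" "x = (\<Sum>g\<in>B. sc (c1 g) (e g))"
      "\<forall>g\<in>B. c2 g \<in> loc_t" "y = (\<Sum>g\<in>B. sc (c2 g) (e g))" unfolding Sp_def by blast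
    thus ?thesis unfolding Sp_def
      by (intro CollectI exI[of _ "\<lambda>g. c1 g + c2 g"]) (auto simp: loc_t_add sc_add2 sum.distrib)
  qed
  have Spsc: "sc a x \<in> Sp" if "a \<in> loc_t" "x \<in> Sp" for a x
  proof -
    from that obtain c where "\<forall>g\<in>B. c g \<in> loc_t" "x = (\<Sum>g\<in>B. sc (c g) (e g))" unfolding Sp_def by blast
    thus ?thesis unfolding Sp_def using that(1)
      by (intro CollectI exI[of _ "\<lambda>g. a * c g"]) (auto simp: loc_t_mult sc_sum sc_sc)
  qed
  have SpG: "e g \<in> Sp" if "g \<in> B" for g
  proof -
    have "\<And>h. sc (if h = g then 1 else 0) (e h) = (if h = g then e h else 0)" by (simp add: sc_one sc_0)
    hence "(\<Sum>h\<in>B. sc (if h = g then 1 else 0) (e h)) = e g" using fin that by simp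
    thus ?thesis unfolding Sp_def
      by (intro CollectI exI[of _ "\<lambda>h. if h = g then 1 else 0"]) auto
  qed
  define Y where "Y = {m \<in> PR loc_t. homog_comp 0 m = 0 \<and> homog_comp 1 m \<in> Sp}"
  have "is_ideal loc_t Y"
    unfolding is_ideal_def[of loc_t Y]
  proof (intro conjI ballI)
    show "Y \<subseteq> PR loc_t" unfolding Y_def by blast
    show "0 \<in> Y" unfolding Y_def using Sp0 by (simp add: PR_0 subr_loc_t)
    show "f + g \<in> Y" if "f \<in> Y" "g \<in> Y" for f g
      using that Spadd unfolding Y_def by (simp add: hc_add PR_add subr_loc_t)
    show "r * f \<in> Y" if "f \<in> Y" "r \<in> PR loc_t" for f r
    proof -
      have f: "f \<in> PR loc_t" "homog_comp 0 f = 0" "homog_comp 1 f \<in> Sp" using that(1) unfolding Y_def by auto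
      have r0: "Poly_Mapping.lookup r 0 \<in> loc_t" using that(2) by (rule PR_lookup)
      have "homog_comp 0 (r * f) = 0"
        unfolding hc_mult_expand by (intro sum.neutral ballI) (auto simp: f(2))
      moreover have T: "(if i + k = 1 then homog_comp i r * homog_comp k f else 0) \<in> Sp" for i k
      proof (cases "i + k = 1")
        case True
        then consider "i = 0" "k = 1" | "i = 1" "k = 0" by arith
        thus ?thesis
        proof cases
          case 1 thus ?thesis using Spsc[OF r0 f(3)] by (simp add: hc0_eq sc_def)
        next
          case 2 thus ?thesis using Sp0 f(2) by simp
        qed
      qed (simp add: Sp0)
      have "homog_comp 1 (r * f) \<in> Sp"
        unfolding hc_mult_expand
        using Sp0 Spadd T by (auto intro!: N_sum[of Sp])
      ultimately show ?thesis unfolding Y_def using that f(1) by (simp add: PR_mult subr_loc_t)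
    qed
  qed
  moreover have "e ` B \<subseteq> Y"
  proof
    fix x assume "x \<in> e ` B"
    then obtain g where g: "g \<in> B" "x = e g" by blast
    have h: "homog 1 (e g)" "e g \<in> PR loc_t" using eB g(1) by auto
    have "homog_comp 0 (e g) = 0" "homog_comp 1 (e g) = e g" using hc_homog[OF h(1)] by simp_all
    thus "x \<in> Y" unfolding Y_def using SpG g h by simp
  qed
  ultimately have "ideal_gen loc_t (e ` B) \<subseteq> Y" by (rule ideal_gen_least)
  hence "homog_comp 1 q \<in> Sp" using q unfolding Y_def by blast
  hence "q \<in> Sp" using hq by (simp add: hc_homog)
  thus ?thesis unfolding Sp_def by blast
qed

lemma mdeg_single: "mdeg (Poly_Mapping.single v (k::nat)) = k"
  by (simp add: mdeg_def)

lemma mdeg_split: "N \<le> mdeg b \<Longrightarrow> \<exists>a d. b = a + d \<and> mdeg a = N"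
proof (induction N)
  case 0 show ?case by (intro exI[of _ 0] exI[of _ b]) simp
next
  case (Suc N)
  then obtain a d where ad: "b = a + d" "mdeg a = N" by (metis Suc_leD)
  hence "mdeg d \<ge> 1" using Suc.prems by (simp add: mdeg_add)
  hence "d \<noteq> 0" by auto
  then obtain v where v: "Poly_Mapping.lookup d v \<noteq> 0" by (metis poly_mapping_eqI lookup_zero)
  define d' where "d' = d - Poly_Mapping.single v 1"
  have "d = Poly_Mapping.single v 1 + d'"
    by (rule poly_mapping_eqI) (use v in \<open>auto simp: d'_def lookup_add lookup_minus lookup_single when_def\<close>)
  hence "b = (a + Poly_Mapping.single v 1) + d'" using ad by (simp add: add.assoc)
  moreover have "mdeg (a + Poly_Mapping.single v 1) = Suc N" using ad by (simp add: mdeg_add mdeg_single)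
  ultimately show ?case by blast
qed

lemma ideal_gen_finite:
  fixes G :: "('v, 'a::comm_ring_1) mpoly set"
  assumes C: "subr C" and G: "G \<subseteq> PR C" and q: "q \<in> ideal_gen C G"
  shows "\<exists>F. F \<subseteq> G \<and> finite F \<and> q \<in> ideal_gen C F"
proof -
  let ?D = "{q. \<exists>F. F \<subseteq> G \<and> finite F \<and> q \<in> ideal_gen C F}"
  have FI: "is_ideal C (ideal_gen C F)" if "F \<subseteq> G" for F
  proof (rule ideal_gen_ideal[OF C])
    show "F \<subseteq> PR C" using that G by (rule subset_trans)
  qed
  have "is_ideal C ?D"
    unfolding is_ideal_def[of C ?D]
  proof (intro conjI ballI)
    show "?D \<subseteq> PR C"
    proof
      fix x assume "x \<in> ?D"
      then obtain F where F: "F \<subseteq> G" "x \<in> ideal_gen C F" by blast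
      show "x \<in> PR C" using ideal_PR[OF FI[OF F(1)]] F(2) by (rule subsetD)
    qed
    have "0 \<in> ideal_gen C ({} :: ('v, 'a) mpoly set)" by (rule ideal_0[OF FI]) simp
    thus "0 \<in> ?D" by (intro CollectI exI[of _ "{}"]) simp
    show "f + g \<in> ?D" if "f \<in> ?D" "g \<in> ?D" for f g
    proof -
      from that obtain F1 F2 where F: "F1 \<subseteq> G" "finite F1" "f \<in> ideal_gen C F1" "F2 \<subseteq> G" "finite F2" "g \<in> ideal_gen C F2" by blast
      have U: "F1 \<union> F2 \<subseteq> G" "finite (F1 \<union> F2)" using F by auto
      have "f \<in> ideal_gen C (F1 \<union> F2)" using ideal_gen_mono[of F1 "F1 \<union> F2" C] F(3) by (rule subsetD) simp
      moreover have "g \<in> ideal_gen C (F1 \<union> F2)" using ideal_gen_mono[of F2 "F1 \<union> F2" C] F(6) by (rule subsetD) simp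
      ultimately have "f + g \<in> ideal_gen C (F1 \<union> F2)" by (rule ideal_add[OF FI[OF U(1)]])
      thus ?thesis using U by (intro CollectI exI[of _ "F1 \<union> F2"]) simp
    qed
    show "r * f \<in> ?D" if "f \<in> ?D" "r \<in> PR C" for f r
    proof -
      from that obtain F where F: "F \<subseteq> G" "finite F" "f \<in> ideal_gen C F" by blast
      have "r * f \<in> ideal_gen C F" using F(3) that(2) by (rule ideal_mult[OF FI[OF F(1)]])
      thus ?thesis using F by (intro CollectI exI[of _ F]) simp
    qed
  qed
  moreover have "G \<subseteq> ?D"
  proof
    fix g assume g: "g \<in> G"
    have "g \<in> ideal_gen C {g}" using ideal_gen_sub[of "{g}" C] by simp
    thus "g \<in> ?D" using g by (intro CollectI exI[of _ "{g}"]) simp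
  qed
  ultimately have "ideal_gen C G \<subseteq> ?D" by (rule ideal_gen_least)
  thus ?thesis using q by blast
qed




lemma min_fin_gen:
  fixes Ji :: "('v::finite, 'k::field) mpoly set"
  assumes J: "is_ideal UNIV Ji" and M: "minimal_reduction UNIV Ji Qb"
  shows "\<exists>G0. finite G0 \<and> G0 \<subseteq> {p. homog 1 p} \<and> Qb = ideal_gen UNIV G0"
proof -
  obtain G N where G: "G \<subseteq> {p \<in> PR UNIV. homog 1 p}" "Qb = ideal_gen UNIV G"
    and N: "\<forall>n\<ge>N. red_at UNIV Ji Qb n"
    using M unfolding minimal_reduction_def is_reduction_def by blast
  define A where "A = {a :: 'v \<Rightarrow>\<^sub>0 nat. mdeg a = N}"
  have finA: "finite A" unfolding A_def by (rule fin_mdeg)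
  have "\<forall>a\<in>A. \<exists>F. F \<subseteq> G \<and> finite F \<and> (\<exists>q j. Poly_Mapping.single a (1::'k) = q + j \<and> q \<in> ideal_gen UNIV F \<and> j \<in> Ji)"
  proof
    fix a assume a: "a \<in> A"
    have "homog N (Poly_Mapping.single a (1::'k))" using a by (simp add: A_def homog_def)
    moreover have "red_at UNIV Ji Qb N" using N by simp
    ultimately have "Poly_Mapping.single a 1 \<in> ideal_sum Qb Ji" unfolding red_at_def by simp
    then obtain q j where qj: "Poly_Mapping.single a 1 = q + j" "q \<in> Qb" "j \<in> Ji"
      unfolding ideal_sum_def by blast
    have "q \<in> ideal_gen UNIV G" using qj(2) G(2) by simp
    then obtain F where "F \<subseteq> G" "finite F" "q \<in> ideal_gen UNIV F"
      using ideal_gen_finite[OF subr_UNIV, of G q] by auto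
    thus "\<exists>F. F \<subseteq> G \<and> finite F \<and> (\<exists>q j. Poly_Mapping.single a (1::'k) = q + j \<and> q \<in> ideal_gen UNIV F \<and> j \<in> Ji)"
      using qj by blast
  qed
  then obtain Fm where Fm: "\<forall>a\<in>A. Fm a \<subseteq> G \<and> finite (Fm a) \<and>
      (\<exists>q j. Poly_Mapping.single a (1::'k) = q + j \<and> q \<in> ideal_gen UNIV (Fm a) \<and> j \<in> Ji)"
    by (rule bchoice[THEN exE]) blast
  define G0 where "G0 = (\<Union>a\<in>A. Fm a)"
  have G0G: "G0 \<subseteq> G" using Fm by (auto simp: G0_def)
  have finG0: "finite G0" using Fm finA by (auto simp: G0_def)
  let ?Q0 = "ideal_gen UNIV G0"
  have Q0: "is_ideal UNIV ?Q0" by (rule ideal_UNIV)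
  have Ns: "is_ideal UNIV (ideal_sum ?Q0 Ji)" by (rule ideal_sum_ideal[OF subr_UNIV Q0 J])
  have mono: "?Q0 \<subseteq> Qb" unfolding G(2) using G0G by (rule ideal_gen_mono)
  have monoS: "Poly_Mapping.single a 1 \<in> ideal_sum ?Q0 Ji" if aA: "a \<in> A" for a
  proof -
    obtain q j where qj: "Poly_Mapping.single a 1 = q + j" "q \<in> ideal_gen UNIV (Fm a)" "j \<in> Ji"
      using Fm aA by blast
    have "Fm a \<subseteq> G0" using aA by (auto simp: G0_def)
    hence "ideal_gen UNIV (Fm a) \<subseteq> ?Q0" by (rule ideal_gen_mono)
    thus ?thesis using qj unfolding ideal_sum_def by blast
  qed
  have red0: "red_at UNIV Ji ?Q0 n" if nN: "n \<ge> N" for n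
    unfolding red_at_def
  proof (intro ballI impI)
    fix f :: "('v,'k) mpoly" assume hf: "f \<in> PR UNIV" "homog n f"
    have "f = (\<Sum>b\<in>Poly_Mapping.keys f. Poly_Mapping.single b (Poly_Mapping.lookup f b))"
      by (simp add: pm_expand_keys)
    also have "\<dots> \<in> ideal_sum ?Q0 Ji"
    proof (rule ideal_sum_closed[OF Ns])
      fix b assume b: "b \<in> Poly_Mapping.keys f"
      hence "mdeg b = n" using hf(2) by (simp add: homog_def)
      then obtain a d where ad: "b = a + d" "mdeg a = N" using mdeg_split[of N b] nN by auto
      hence aA: "a \<in> A" by (simp add: A_def)
      have "Poly_Mapping.single b (Poly_Mapping.lookup f b) = Poly_Mapping.single d (Poly_Mapping.lookup f b) * Poly_Mapping.single a 1"
        by (simp add: mult_single ad add.commute)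
      also have "\<dots> \<in> ideal_sum ?Q0 Ji" using monoS[OF aA] by (rule ideal_mult[OF Ns]) simp
      finally show "Poly_Mapping.single b (Poly_Mapping.lookup f b) \<in> ideal_sum ?Q0 Ji" .
    qed
    finally show "f \<in> ideal_sum ?Q0 Ji" .
  qed
  have G0h: "G0 \<subseteq> {p \<in> PR UNIV. homog 1 p}" using G0G G(1) by blast
  have "is_reduction UNIV Ji ?Q0" unfolding is_reduction_def using G0h red0 by blast
  hence "?Q0 = Qb" using M mono unfolding minimal_reduction_def by blast
  thus ?thesis using finG0 G0G G(1) by blast
qed

lemma minB:
  fixes w :: "'v::finite \<Rightarrow> int" and I :: "('v, 'k::field) mpoly set"
  assumes I: "homog_ideal UNIV I" and M: "minimal_reduction loc_t (tilde_ideal w I) Q"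
  shows "minimal_reduction UNIV (init_ideal w I) (rho ` Q) \<and>
         red_num_Q loc_t (tilde_ideal w I) Q = red_num_Q UNIV (init_ideal w I) (rho ` Q)"
proof -
  obtain G where G: "G \<subseteq> {p \<in> PR loc_t. homog 1 p}" "Q = ideal_gen loc_t G"
    using M unfolding minimal_reduction_def is_reduction_def by blast
  have GP: "G \<subseteq> PR loc_t" and hG: "\<And>g. g \<in> G \<Longrightarrow> homog 1 g" using G(1) by auto
  have Qi: "is_ideal loc_t Q" unfolding G(2) by (rule ideal_gen_ideal[OF subr_loc_t GP])
  have RI: "red_at loc_t (tilde_ideal w I) Q n \<longleftrightarrow> red_at UNIV (init_ideal w I) (rho ` Q) n" for n
    unfolding G(2) by (rule red_iff[OF I GP hG])
  have redQ: "is_reduction loc_t (tilde_ideal w I) Q" using M unfolding minimal_reduction_def by blast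
  have rhoG: "rho ` Q = ideal_gen UNIV (rho ` G)" unfolding G(2) by (rule rho_ideal_gen[OF GP])
  have red1: "is_reduction UNIV (init_ideal w I) (rho ` Q)"
  proof -
    have "rho ` G \<subseteq> {p \<in> PR UNIV. homog 1 p}" using hG homog_rho by auto
    moreover obtain N where "\<forall>n\<ge>N. red_at loc_t (tilde_ideal w I) Q n"
      using redQ unfolding is_reduction_def by blast
    ultimately show ?thesis unfolding is_reduction_def using rhoG RI by blast
  qed
  have eqnum: "red_num_Q loc_t (tilde_ideal w I) Q = red_num_Q UNIV (init_ideal w I) (rho ` Q)"
    unfolding red_num_Q_def using RI by simp
  have "Pb = rho ` Q" if Pb: "is_reduction UNIV (init_ideal w I) Pb" "Pb \<subseteq> rho ` Q" for Pb
  proof -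
    obtain Gb where Gb: "Gb \<subseteq> {p \<in> PR UNIV. homog 1 p}" "Pb = ideal_gen UNIV Gb"
      using Pb(1) unfolding is_reduction_def by blast
    obtain Nb where Nb: "\<forall>n\<ge>Nb. red_at UNIV (init_ideal w I) Pb n"
      using Pb(1) unfolding is_reduction_def by blast
    have lift: "\<exists>q. q \<in> Q \<and> homog 1 q \<and> rho q = l" if l: "l \<in> Gb" for l
    proof -
      have "l \<in> Pb" using l Gb(2) ideal_gen_sub by blast
      hence "l \<in> rho ` Q" using Pb(2) by blast
      then obtain q where q: "q \<in> Q" "rho q = l" by blast
      have hl: "homog 1 l" using l Gb(1) by blast
      have "homog_comp 1 q \<in> Q" using q(1) ideal_gen_hc_homog[OF subr_loc_t GP hG] G(2) by blast
      moreover have "rho (homog_comp 1 q) = l" using q(2) hl by (simp add: rho_hc hc_homog)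
      ultimately show ?thesis using homog_hc by blast
    qed
    define L where "L l = (SOME q. q \<in> Q \<and> homog 1 q \<and> rho q = l)" for l
    have L: "L l \<in> Q \<and> homog 1 (L l) \<and> rho (L l) = l" if "l \<in> Gb" for l
      unfolding L_def using someI_ex[OF lift[OF that]] .
    have G'P: "L ` Gb \<subseteq> PR loc_t" using L ideal_PR[OF Qi] by blast
    have hG': "\<And>g. g \<in> L ` Gb \<Longrightarrow> homog 1 g" using L by blast
    have rLG: "rho ` L ` Gb = Gb"
    proof -
      have "rho ` L ` Gb = (\<lambda>l. l) ` Gb" unfolding image_image by (rule image_cong) (simp_all add: L)
      thus ?thesis by simp
    qed
    have rP: "rho ` ideal_gen loc_t (L ` Gb) = Pb"
      using rho_ideal_gen[OF G'P] rLG Gb(2) by simp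
    have "is_reduction loc_t (tilde_ideal w I) (ideal_gen loc_t (L ` Gb))"
    proof -
      have "L ` Gb \<subseteq> {p \<in> PR loc_t. homog 1 p}" using G'P hG' by blast
      moreover have "\<forall>n\<ge>Nb. red_at loc_t (tilde_ideal w I) (ideal_gen loc_t (L ` Gb)) n"
        using red_iff[OF I G'P hG', of w] rP Nb by simp
      ultimately show ?thesis unfolding is_reduction_def by blast
    qed
    moreover have "ideal_gen loc_t (L ` Gb) \<subseteq> Q" using L by (intro ideal_gen_least[OF Qi]) blast
    ultimately have "ideal_gen loc_t (L ` Gb) = Q" using M unfolding minimal_reduction_def by blast
    thus ?thesis using rP by simp
  qed
  hence "minimal_reduction UNIV (init_ideal w I) (rho ` Q)"
    using red1 unfolding minimal_reduction_def by blast
  thus ?thesis using eqnum by blast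
qed

lemma minA:
  fixes w :: "'v::finite \<Rightarrow> int" and I :: "('v, 'k::field) mpoly set"
  assumes I: "homog_ideal UNIV I" and M: "minimal_reduction UNIV (init_ideal w I) Qb"
  shows "\<exists>Q. minimal_reduction loc_t (tilde_ideal w I) Q \<and> rho ` Q = Qb"
proof -
  obtain G0 where G0: "finite G0" "G0 \<subseteq> {p. homog 1 p}" "Qb = ideal_gen UNIV G0"
    using min_fin_gen[OF init_is_ideal M] by blast
  have GP: "iota ` G0 \<subseteq> PR loc_t" using iota_PR by blast
  have hG: "\<And>g. g \<in> iota ` G0 \<Longrightarrow> homog 1 g" using G0(2) homog_iota by blast
  let ?Q = "ideal_gen loc_t (iota ` G0)"
  have Qi: "is_ideal loc_t ?Q" by (rule ideal_gen_ideal[OF subr_loc_t GP])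
  have rQ: "rho ` ?Q = Qb" using rho_ideal_gen[OF GP] G0(3) by (simp add: image_image)
  have redb: "is_reduction UNIV (init_ideal w I) Qb" using M unfolding minimal_reduction_def by blast
  have redQ: "is_reduction loc_t (tilde_ideal w I) ?Q"
  proof -
    obtain N where "\<forall>n\<ge>N. red_at UNIV (init_ideal w I) Qb n" using redb unfolding is_reduction_def by blast
    hence "\<forall>n\<ge>N. red_at loc_t (tilde_ideal w I) ?Q n" using red_iff[OF I GP hG, of w] rQ by simp
    moreover have "iota ` G0 \<subseteq> {p \<in> PR loc_t. homog 1 p}" using GP hG by blast
    ultimately show ?thesis unfolding is_reduction_def by blast
  qed
  have "Q' = ?Q" if Q': "is_reduction loc_t (tilde_ideal w I) Q'" "Q' \<subseteq> ?Q" for Q'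
  proof -
    obtain G' where G': "G' \<subseteq> {p \<in> PR loc_t. homog 1 p}" "Q' = ideal_gen loc_t G'"
      using Q'(1) unfolding is_reduction_def by blast
    have G'P: "G' \<subseteq> PR loc_t" and hG': "\<And>g. g \<in> G' \<Longrightarrow> homog 1 g" using G'(1) by auto
    have Q'i: "is_ideal loc_t Q'" unfolding G'(2) by (rule ideal_gen_ideal[OF subr_loc_t G'P])
    have RI': "red_at loc_t (tilde_ideal w I) Q' n \<longleftrightarrow> red_at UNIV (init_ideal w I) (rho ` Q') n" for n
      unfolding G'(2) by (rule red_iff[OF I G'P hG'])
    have "is_reduction UNIV (init_ideal w I) (rho ` Q')"
    proof -
      have "rho ` Q' = ideal_gen UNIV (rho ` G')" unfolding G'(2) by (rule rho_ideal_gen[OF G'P])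
      moreover have "rho ` G' \<subseteq> {p \<in> PR UNIV. homog 1 p}" using hG' homog_rho by auto
      moreover obtain N where "\<forall>n\<ge>N. red_at loc_t (tilde_ideal w I) Q' n"
        using Q'(1) unfolding is_reduction_def by blast
      ultimately show ?thesis unfolding is_reduction_def using RI' by blast
    qed
    moreover have "rho ` Q' \<subseteq> Qb" using Q'(2) rQ by blast
    ultimately have rQ': "rho ` Q' = Qb" using M unfolding minimal_reduction_def by blast
    have eB: "\<And>g. g \<in> G0 \<Longrightarrow> homog 1 (iota g) \<and> iota g \<in> PR loc_t"
      using G0(2) homog_iota iota_PR by blast
    have "\<forall>l\<in>G0. iota l \<in> Q'"
    proof (rule nakayama[OF G0(1)])
      show "0 \<in> Q'" using Q'i by (rule ideal_0)
      show "x + y \<in> Q'" if "x \<in> Q'" "y \<in> Q'" for x y using Q'i that by (rule ideal_add)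
      show "sc c x \<in> Q'" if "c \<in> loc_t" "x \<in> Q'" for c x using ideal_sc[OF subr_loc_t Q'i] that by blast
      show "\<forall>l\<in>G0. \<exists>n\<in>Q'. \<exists>c. (\<forall>b\<in>G0. c b \<in> loc_t \<and> ev0 (c b) = 0) \<and> iota l = n + (\<Sum>b\<in>G0. sc (c b) (iota b))"
      proof
        fix l assume l: "l \<in> G0"
        have "l \<in> Qb" using l G0(3) ideal_gen_sub by blast
        hence "l \<in> rho ` Q'" using rQ' by simp
        then obtain q where q: "q \<in> Q'" "rho q = l" by blast
        have hl: "homog 1 l" using l G0(2) by blast
        define q1 where "q1 = homog_comp 1 q"
        have q1Q': "q1 \<in> Q'" unfolding q1_def using q(1) ideal_gen_hc_homog[OF subr_loc_t G'P hG'] G'(2) by blast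
        have rq1: "rho q1 = l" unfolding q1_def using q(2) hl by (simp add: rho_hc hc_homog)
        have "q1 \<in> ?Q" using q1Q' Q'(2) by blast
        then obtain c where c: "\<forall>g\<in>G0. c g \<in> loc_t" and q1e: "q1 = (\<Sum>g\<in>G0. sc (c g) (iota g))"
          using span1[of G0 iota q1, OF G0(1) eB _ homog_hc[of 1 q, folded q1_def]] by blast
        have l_eq: "l = (\<Sum>g\<in>G0. sc (ev0 (c g)) g)"
        proof -
          have "l = rho (\<Sum>g\<in>G0. sc (c g) (iota g))" using rq1 q1e by simp
          also have "\<dots> = (\<Sum>g\<in>G0. rho (sc (c g) (iota g)))"
            by (rule rho_sum) (use c in \<open>simp add: PR_sc subr_loc_t iota_PR\<close>)
          also have "\<dots> = (\<Sum>g\<in>G0. sc (ev0 (c g)) g)"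
            by (rule sum.cong) (use c in \<open>simp_all add: rho_sc iota_PR\<close>)
          finally show ?thesis .
        qed
        define d where "d g = kap (ev0 (c g)) - c g" for g
        have "iota l = (\<Sum>g\<in>G0. sc (kap (ev0 (c g))) (iota g))" unfolding l_eq by (simp add: iota_sum iota_sc)
        also have "\<dots> = q1 + (\<Sum>g\<in>G0. sc (d g) (iota g))" unfolding q1e d_def
          by (simp add: sc_diff2 sum_subtractf)
        finally have "iota l = q1 + (\<Sum>g\<in>G0. sc (d g) (iota g))" .
        moreover have "\<forall>b\<in>G0. d b \<in> loc_t \<and> ev0 (d b) = 0" using c by (auto simp: d_def loc_t_diff ev0_diff)
        ultimately show "\<exists>n\<in>Q'. \<exists>c. (\<forall>b\<in>G0. c b \<in> loc_t \<and> ev0 (c b) = 0) \<and> iota l = n + (\<Sum>b\<in>G0. sc (c b) (iota b))"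
          using q1Q' by blast
      qed
    qed
    hence "?Q \<subseteq> Q'" by (intro ideal_gen_least[OF Q'i]) blast
    thus ?thesis using Q'(2) by blast
  qed
  hence "minimal_reduction loc_t (tilde_ideal w I) ?Q" using redQ unfolding minimal_reduction_def by blast
  thus ?thesis using rQ by blast
qed

theorem lemma3p2:
  fixes w :: "'v::finite \<Rightarrow> int"
    and I :: "('v, 'k::field) mpoly set"
  assumes "infinite (UNIV :: 'k set)"
    and "homog_ideal UNIV I"
  shows "red_num UNIV (init_ideal w I) = red_num loc_t (tilde_ideal w I)"
proof -
  let ?SR = "{red_num_Q UNIV (init_ideal w I) Q |Q. minimal_reduction UNIV (init_ideal w I) Q}"
  let ?SS = "{red_num_Q loc_t (tilde_ideal w I) Q |Q. minimal_reduction loc_t (tilde_ideal w I) Q}"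
  have "?SS \<subseteq> ?SR"
  proof
    fix x assume "x \<in> ?SS"
    then obtain Q where x: "x = red_num_Q loc_t (tilde_ideal w I) Q" and M: "minimal_reduction loc_t (tilde_ideal w I) Q"
      by blast
    have "minimal_reduction UNIV (init_ideal w I) (rho ` Q)" "x = red_num_Q UNIV (init_ideal w I) (rho ` Q)"
      using minB[OF assms(2) M] x by auto
    thus "x \<in> ?SR" by blast
  qed
  moreover have "?SR \<subseteq> ?SS"
  proof
    fix x assume "x \<in> ?SR"
    then obtain Qb where x: "x = red_num_Q UNIV (init_ideal w I) Qb" and M: "minimal_reduction UNIV (init_ideal w I) Qb"
      by blast
    obtain Q where Q: "minimal_reduction loc_t (tilde_ideal w I) Q" "rho ` Q = Qb"
      using minA[OF assms(2) M] by blast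
    have "x = red_num_Q loc_t (tilde_ideal w I) Q" using minB[OF assms(2) Q(1)] Q(2) x by simp
    thus "x \<in> ?SS" using Q(1) by blast
  qed
  ultimately have "?SR = ?SS" by blast
  thus ?thesis unfolding red_num_def by simp
qed


end
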